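(* Suppose $\mathbf{a}=\{a_n\}_{n=1}^\infty$ and $\mathbf{b}=\{b_n\}_{n=1}^\infty$ are linearly recurrent sequences of complex numbers such that $|a_n-b_n|$ is bounded. Then the minimal polynomials of $\mathbf{a}$ and $\mathbf{b}$ have the same roots outside the unit circle, with the same multiplicities. In particular, $\max_k \mathrm{GR}^{(k)}(\mathbf{a})=\max_k\mathrm{GR}^{(k)}(\mathbf{b})$.
   Context: A linear recurrence is a relation $a_{n+d}+c_{d-1}a_{n+d-1}+\cdots+c_0a_n=0$ for all $n$ with constant complex coefficients; a sequence is linearly recurrent if it satisfies one, and its minimal polynomial is the unique monic characteristic polynomial $t^d+c_{d-1}t^{d-1}+\cdots+c_0$ of minimal degree of a linear recurrence it satisfies. For a complex sequence $\mathbf{a}$ and $k\ge1$, $\mathrm{GR}^{(k)}(\mathbf{a})=\limsup_{n\to\infty}|\det H_{n,k}|^{1/n}$, where $H_{n,k}$ is the $k\times k$ matrix with $(i,j)$ entry $a_{n+i+j}$ ($0\le i,j\le k-1$); $\mathrm{GR}^{(0)}(\mathbf{a})=1$. *)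

theory Defs
  imports Complex_Main "HOL-Computational_Algebra.Polynomial" "HOL-Library.Extended_Real"
    "Jordan_Normal_Form.Determinant"
begin

definition lin_rec_poly :: "(nat \<Rightarrow> complex) \<Rightarrow> complex poly \<Rightarrow> bool" where
  "lin_rec_poly a p \<longleftrightarrow> lead_coeff p = 1 \<and>
     (\<forall>n. (\<Sum>i\<le>degree p. coeff p i * a (n + i)) = 0)"

definition linearly_recurrent :: "(nat \<Rightarrow> complex) \<Rightarrow> bool" where
  "linearly_recurrent a \<longleftrightarrow> (\<exists>p. lin_rec_poly a p)"

definition min_poly :: "(nat \<Rightarrow> complex) \<Rightarrow> complex poly" where
  "min_poly a = (THE p. lin_rec_poly a p \<and> (\<forall>q. lin_rec_poly a q \<longrightarrow> degree p \<le> degree q))"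

definition hankel :: "(nat \<Rightarrow> complex) \<Rightarrow> nat \<Rightarrow> nat \<Rightarrow> complex mat" where
  "hankel a n k = mat k k (\<lambda>(i, j). a (n + i + j))"

definition GR :: "nat \<Rightarrow> (nat \<Rightarrow> complex) \<Rightarrow> ereal" where
  "GR k a = (if k = 0 then 1
     else limsup (\<lambda>n. ereal (root n (cmod (det (hankel a n k))))))"

end

theory Submission
  imports Defs "HOL-Computational_Algebra.Fundamental_Theorem_Algebra" "HOL-Real_Asymp.Real_Asymp"
    "HOL-Computational_Algebra.Polynomial_Factorial" "HOL-Computational_Algebra.Field_as_Ring"
begin

definition pa :: "complex poly \<Rightarrow> (nat \<Rightarrow> complex) \<Rightarrow> nat \<Rightarrow> complex" where
  "pa q x = (\<lambda>n. \<Sum>i\<le>degree q. coeff q i * x (n+i))"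

lemma pa_N: "degree q \<le> N \<Longrightarrow> pa q x n = (\<Sum>i\<le>N. coeff q i * x (n+i))"
  unfolding pa_def
  by (rule sum.mono_neutral_left) (auto simp: coeff_eq_0)

lemma pa_0[simp]: "pa 0 x = (\<lambda>n. 0)"
  by (simp add: pa_def)

lemma pa_pCons: "pa (pCons c q) x n = c * x n + pa q x (Suc n)"
proof -
  have "pa (pCons c q) x n = (\<Sum>i\<le>Suc (degree q). coeff (pCons c q) i * x (n+i))"
    by (rule pa_N) (simp add: degree_pCons_le)
  also have "\<dots> = c * x n + (\<Sum>i\<le>degree q. coeff q i * x (Suc n + i))"
    by (subst sum.atMost_Suc_shift) simp
  finally show ?thesis by (simp add: pa_def)
qed

lemma pa_add: "pa (p + q) x n = pa p x n + pa q x n"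
proof -
  let ?N = "max (degree p) (degree q)"
  have "pa (p + q) x n = (\<Sum>i\<le>?N. coeff (p+q) i * x (n+i))"
    by (rule pa_N) (simp add: degree_add_le)
  also have "\<dots> = (\<Sum>i\<le>?N. coeff p i * x (n+i)) + (\<Sum>i\<le>?N. coeff q i * x (n+i))"
    by (simp add: algebra_simps sum.distrib)
  also have "\<dots> = pa p x n + pa q x n"
    using pa_N[of p ?N x n] pa_N[of q ?N x n] by simp
  finally show ?thesis .
qed

lemma pa_smult: "pa (smult c q) x n = c * pa q x n"
proof -
  have "pa (smult c q) x n = (\<Sum>i\<le>degree q. coeff (smult c q) i * x (n+i))"
    by (rule pa_N) simp
  then show ?thesis by (simp add: pa_def sum_distrib_left mult.assoc)
qed

lemma pa_mult: "pa (p * q) x = pa p (pa q x)"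
proof (induction p)
  case 0
  then show ?case by (simp add: pa_def)
next
  case (pCons c p)
  show ?case
  proof
    fix n
    have "pa (pCons c p * q) x n = pa (smult c q + pCons 0 (p * q)) x n"
      by simp
    also have "\<dots> = c * pa q x n + pa (p*q) x (Suc n)"
      by (simp add: pa_add pa_smult pa_pCons)
    also have "\<dots> = pa (pCons c p) (pa q x) n"
      by (simp add: pa_pCons pCons.IH)
    finally show "pa (pCons c p * q) x n = pa (pCons c p) (pa q x) n" .
  qed
qed

lemma pa_1[simp]: "pa 1 x = x"
  by (simp add: pa_def)

lemma pa_commute: "pa p (pa q x) = pa q (pa p x)"
  by (metis pa_mult mult.commute)

lemma pa_plus_seq: "pa q (\<lambda>n. x n + y n) n = pa q x n + pa q y n"
  by (simp add: pa_def algebra_simps sum.distrib)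

lemma pa_minus_seq: "pa q (\<lambda>n. x n - y n) n = pa q x n - pa q y n"
  by (simp add: pa_def algebra_simps sum_subtractf)

lemma pa_scale_seq: "pa q (\<lambda>n. c * x n) n = c * pa q x n"
  by (simp add: pa_def algebra_simps sum_distrib_left)

lemma pa_sum_seq: "finite S \<Longrightarrow> pa q (\<lambda>n. \<Sum>s\<in>S. f s n) n = (\<Sum>s\<in>S. pa q (f s) n)"
  unfolding pa_def by (simp add: sum_distrib_left) (rule sum.swap)

lemma pa_zero_seq[simp]: "pa q (\<lambda>n. 0) = (\<lambda>n. 0)"
  by (simp add: pa_def)

lemma pa_lin: "pa [:-z,1:] x n = x (Suc n) - z * x n"
  by (simp add: pa_def)

lemma lin_rec_poly_pa: "lin_rec_poly a p \<longleftrightarrow> lead_coeff p = 1 \<and> pa p a = (\<lambda>n. 0)"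
  unfolding lin_rec_poly_def pa_def by (auto simp: fun_eq_iff)

lemma monic_dvd_antisym:
  fixes p q :: "complex poly"
  assumes "lead_coeff p = 1" "lead_coeff q = 1" "p dvd q" "q dvd p"
  shows "p = q"
proof -
  have p0: "p \<noteq> 0" and q0: "q \<noteq> 0" using assms by auto
  obtain k where k: "q = p * k" using assms(3) by blast
  have k0: "k \<noteq> 0" using q0 k by auto
  have "degree p \<le> degree q" "degree q \<le> degree p"
    using dvd_imp_degree_le assms p0 q0 by auto
  then have "degree k = 0" using k p0 k0 degree_mult_eq by fastforce
  moreover have "lead_coeff k = 1" using assms k by (simp add: lead_coeff_mult)
  ultimately have "k = 1"
    by (metis degree_0_id one_pCons)
  then show ?thesis using k by simp
qed

lemma minpoly_props:
  assumes "linearly_recurrent a"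
  shows "lin_rec_poly a (min_poly a)" and "\<And>q. pa q a = (\<lambda>n. 0) \<Longrightarrow> min_poly a dvd q"
proof -
  define P where "P = (\<lambda>d. \<exists>p. lin_rec_poly a p \<and> degree p = d)"
  have ex: "\<exists>d. P d" using assms unfolding linearly_recurrent_def P_def by blast
  define d0 where "d0 = (LEAST d. P d)"
  have "P d0" unfolding d0_def using ex by (rule LeastI_ex)
  then obtain p0 where p0: "lin_rec_poly a p0" "degree p0 = d0" unfolding P_def by blast
  have minim: "degree p0 \<le> degree q" if "lin_rec_poly a q" for q
  proof -
    have "P (degree q)" unfolding P_def using that by blast
    then have "d0 \<le> degree q" unfolding d0_def by (rule Least_le)
    then show ?thesis using p0(2) by simp
  qed
  have p0nz: "p0 \<noteq> 0" using p0 by (auto simp: lin_rec_poly_pa)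
  have pa_p0: "pa p0 a = (\<lambda>n. 0)" using p0 by (simp add: lin_rec_poly_pa)
  have lc0: "lead_coeff p0 = 1" using p0 by (simp add: lin_rec_poly_pa)
  have dvd: "p0 dvd q" if "pa q a = (\<lambda>n. 0)" for q
  proof -
    define r where "r = q mod p0"
    have qe: "q = (q div p0) * p0 + r" unfolding r_def by simp
    have "pa q a n = pa ((q div p0) * p0) a n + pa r a n" for n
      by (subst qe) (rule pa_add)
    then have "pa r a n = 0" for n
      using that pa_p0 by (simp add: pa_mult fun_eq_iff)
    then have par: "pa r a = (\<lambda>n. 0)" by auto
    have "r = 0"
    proof (rule ccontr)
      assume r0: "r \<noteq> 0"
      have "degree r < degree p0"
        using r0 p0nz unfolding r_def
        by (simp add: degree_mod_less')
      define r' where "r' = smult (inverse (lead_coeff r)) r"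
      have "lead_coeff r' = 1" unfolding r'_def using r0 by simp
      moreover have "pa r' a = (\<lambda>n. 0)" unfolding r'_def using par
        by (simp add: fun_eq_iff pa_smult)
      ultimately have "lin_rec_poly a r'" by (simp add: lin_rec_poly_pa)
      then have "degree p0 \<le> degree r'" by (rule minim)
      then show False using \<open>degree r < degree p0\<close> r0 by (simp add: r'_def)
    qed
    then show ?thesis unfolding r_def by (simp add: mod_eq_0_iff_dvd)
  qed
  have the: "min_poly a = p0"
    unfolding min_poly_def
  proof (rule the_equality)
    show "lin_rec_poly a p0 \<and> (\<forall>q. lin_rec_poly a q \<longrightarrow> degree p0 \<le> degree q)"
      using p0 minim by blast
  next
    fix p assume p: "lin_rec_poly a p \<and> (\<forall>q. lin_rec_poly a q \<longrightarrow> degree p \<le> degree q)"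
    have lc: "lead_coeff p = 1" and pap: "pa p a = (\<lambda>n. 0)" using p by (auto simp: lin_rec_poly_pa)
    have pnz: "p \<noteq> 0" using lc by auto
    have "p0 dvd p" using pap by (rule dvd)
    have "degree p \<le> degree p0" using p p0(1) by blast
    moreover have "degree p0 \<le> degree p" using minim p by blast
    ultimately have deq: "degree p = degree p0" by simp
    from \<open>p0 dvd p\<close> obtain k where k: "p = p0 * k" by (rule dvdE)
    have k0: "k \<noteq> 0" using k pnz by auto
    have "degree p = degree p0 + degree k" using k p0nz k0 by (simp add: degree_mult_eq)
    then have "degree k = 0" using deq by simp
    then have "is_unit k" using k0 by (simp add: is_unit_iff_degree)
    then have "p dvd p0" using k by simp
    show "p = p0" by (rule monic_dvd_antisym[OF lc lc0 \<open>p dvd p0\<close> \<open>p0 dvd p\<close>])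
  qed
  show "lin_rec_poly a (min_poly a)" using the p0 by simp
  show "\<And>q. pa q a = (\<lambda>n. 0) \<Longrightarrow> min_poly a dvd q" using the dvd by simp
qed

lemma bounded_no_big_root:
  assumes lr: "linearly_recurrent c" and bd: "\<And>n. cmod (c n) \<le> B" and z: "cmod z > 1"
  shows "poly (min_poly c) z \<noteq> 0"
proof
  assume root: "poly (min_poly c) z = 0"
  define p where "p = min_poly c"
  have lp: "lin_rec_poly c p" unfolding p_def using minpoly_props[OF lr] by simp
  have pap: "pa p c = (\<lambda>n. 0)" and lcp: "lead_coeff p = 1" using lp by (auto simp: lin_rec_poly_pa)
  have "[:-z,1:] dvd p" using root unfolding p_def by (simp add: poly_eq_0_iff_dvd)
  then obtain q where q: "p = [:-z,1:] * q" by (rule dvdE)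
  have pnz: "p \<noteq> 0" using lcp by auto
  then have qnz: "q \<noteq> 0" using q by auto
  define e where "e = pa q c"
  have "pa ([:-z,1:] * q) c = (\<lambda>n. 0)" using pap q by simp
  then have "pa [:-z,1:] e = (\<lambda>n. 0)" unfolding e_def by (simp only: pa_mult)
  then have rec: "e (Suc n) = z * e n" for n using pa_lin[of z e n] by (simp add: fun_eq_iff)
  have epow: "e n = z ^ n * e 0" for n proof (induction n)
    case (Suc n)
    then show ?case by (simp only: rec power_Suc mult.assoc)
  qed simp
  have e0: "e 0 \<noteq> 0"
  proof
    assume "e 0 = 0"
    then have "e n = 0" for n using epow[of n] by simp
    then have "pa q c = (\<lambda>n. 0)" unfolding e_def by (simp add: fun_eq_iff)
    then have "min_poly c dvd q" using minpoly_props(2)[OF lr] by simp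
    then have "degree p \<le> degree q" using dvd_imp_degree_le qnz p_def by simp
    have dm: "degree ([:-z,1:] * q) = degree [:-z,1:] + degree q"
      by (rule degree_mult_eq) (use qnz in auto)
    have d1: "degree [:-z,1:] = (1::nat)" by simp
    have "degree p = degree q + 1" using dm d1 q by (metis add.commute)
    then show False using \<open>degree p \<le> degree q\<close> by simp
  qed
  define B' where "B' = (\<Sum>i\<le>degree q. cmod (coeff q i) * B)"
  have ebd: "cmod (e n) \<le> B'" for n
  proof -
    have "cmod (e n) \<le> (\<Sum>i\<le>degree q. cmod (coeff q i * c (n+i)))"
      unfolding e_def pa_def by (rule norm_sum)
    also have "\<dots> \<le> B'" unfolding B'_def
      by (rule sum_mono) (simp add: norm_mult bd mult_left_mono)
    finally show ?thesis .
  qed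
  obtain n where n: "B' / cmod (e 0) < cmod z ^ n" using real_arch_pow[OF z] by blast
  have "cmod (e n) = cmod z ^ n * cmod (e 0)" using epow[of n] by (simp add: norm_mult norm_power)
  also have "\<dots> > B'" using n e0 by (simp add: divide_less_eq)
  finally show False using ebd[of n] by simp
qed

lemma lr_diff:
  assumes "linearly_recurrent a" "linearly_recurrent b"
  shows "linearly_recurrent (\<lambda>n. a n - b n)"
proof -
  let ?p = "min_poly a * min_poly b"
  have la: "lead_coeff (min_poly a) = 1" "pa (min_poly a) a = (\<lambda>n. 0)"
    using minpoly_props(1)[OF assms(1)] by (auto simp: lin_rec_poly_pa)
  have lb: "lead_coeff (min_poly b) = 1" "pa (min_poly b) b = (\<lambda>n. 0)"
    using minpoly_props(1)[OF assms(2)] by (auto simp: lin_rec_poly_pa)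
  have "pa ?p a = (\<lambda>n. 0)"
    by (subst mult.commute) (simp add: pa_mult la)
  moreover have "pa ?p b = (\<lambda>n. 0)"
    by (simp add: pa_mult lb)
  ultimately have "pa ?p (\<lambda>n. a n - b n) n = 0" for n
    by (simp add: pa_minus_seq)
  then have "lin_rec_poly (\<lambda>n. a n - b n) ?p" using la lb
    by (simp add: lin_rec_poly_pa lead_coeff_mult fun_eq_iff)
  then show ?thesis unfolding linearly_recurrent_def by blast
qed

lemma order_le_bounded_diff:
  assumes lra: "linearly_recurrent a" and lrb: "linearly_recurrent b"
    and bd: "\<And>n. cmod (a n - b n) \<le> B" and z: "cmod z > 1"
  shows "order z (min_poly a) \<le> order z (min_poly b)"
proof -
  define c where "c = (\<lambda>n. a n - b n)"
  have lrc: "linearly_recurrent c" unfolding c_def using lr_diff[OF lra lrb] .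
  have nr: "poly (min_poly c) z \<noteq> 0"
    by (rule bounded_no_big_root[OF lrc _ z]) (use bd c_def in auto)
  have lb: "lead_coeff (min_poly b) = 1" "pa (min_poly b) b = (\<lambda>n. 0)"
    using minpoly_props(1)[OF lrb] by (auto simp: lin_rec_poly_pa)
  have lc: "lead_coeff (min_poly c) = 1" "pa (min_poly c) c = (\<lambda>n. 0)"
    using minpoly_props(1)[OF lrc] by (auto simp: lin_rec_poly_pa)
  have aeq: "a = (\<lambda>n. b n + c n)" unfolding c_def by auto
  have "pa (min_poly b * min_poly c) b = (\<lambda>n. 0)"
    by (subst mult.commute) (simp add: pa_mult lb)
  moreover have "pa (min_poly b * min_poly c) c = (\<lambda>n. 0)"
    by (simp add: pa_mult lc)
  ultimately have "pa (min_poly b * min_poly c) a n = 0" for n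
    by (subst aeq) (simp add: pa_plus_seq)
  then have "min_poly a dvd min_poly b * min_poly c"
    using minpoly_props(2)[OF lra] by (simp add: fun_eq_iff)
  moreover have nz: "min_poly b * min_poly c \<noteq> 0" using lb lc by auto
  ultimately have "order z (min_poly a) \<le> order z (min_poly b * min_poly c)"
    by (rule dvd_imp_order_le[rotated])
  also have "\<dots> = order z (min_poly b) + order z (min_poly c)" using nz by (rule order_mult)
  also have "order z (min_poly c) = 0" using nr by (rule order_0I)
  finally show ?thesis by simp
qed

fun gb :: "(nat \<Rightarrow> complex) \<Rightarrow> nat \<Rightarrow> nat \<Rightarrow> complex" where
  "gb \<mu> j 0 = (if j = 0 then 1 else 0)"
| "gb \<mu> j (Suc m) = \<mu> j * gb \<mu> j m + (if j = 0 then 0 else gb \<mu> (j-1) m)"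

fun tau :: "(nat \<Rightarrow> complex) \<Rightarrow> nat \<Rightarrow> nat \<Rightarrow> nat \<Rightarrow> complex" where
  "tau \<mu> 0 r t = (if r = t then 1 else 0)"
| "tau \<mu> (Suc n) r t = \<mu> t * tau \<mu> n r t + (if t = 0 then 0 else tau \<mu> n r (t-1))"

lemma gb_shift: "t < K \<Longrightarrow> gb \<mu> t (n+i) = (\<Sum>r<K. tau \<mu> n r t * gb \<mu> r i)"
proof (induction n arbitrary: t)
  case 0
  have "(\<Sum>r<K. tau \<mu> 0 r t * gb \<mu> r i) = (\<Sum>r<K. if r = t then gb \<mu> r i else 0)"
    by (rule sum.cong) auto
  then show ?case using 0 by (simp add: sum.delta)
next
  case (Suc n)
  have "gb \<mu> t (Suc n + i) = \<mu> t * gb \<mu> t (n+i) + (if t = 0 then 0 else gb \<mu> (t-1) (n+i))"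
    by simp
  also have "\<dots> = \<mu> t * (\<Sum>r<K. tau \<mu> n r t * gb \<mu> r i) +
      (if t = 0 then 0 else (\<Sum>r<K. tau \<mu> n r (t-1) * gb \<mu> r i))"
    using Suc by auto
  also have "\<dots> = (\<Sum>r<K. tau \<mu> (Suc n) r t * gb \<mu> r i)"
    by (simp add: sum_distrib_left sum.distrib algebra_simps)
  finally show ?case .
qed

lemma tau_zero: "t < r \<Longrightarrow> tau \<mu> n r t = 0"
  by (induction n arbitrary: t) auto

lemma tau_diag: "tau \<mu> n r r = \<mu> r ^ n"
  by (induction n) (auto simp: tau_zero)

lemma tau_bound:
  assumes R: "R \<ge> 1" and mu: "\<And>i. r \<le> i \<Longrightarrow> i \<le> t \<Longrightarrow> cmod (\<mu> i) \<le> R"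
  shows "cmod (tau \<mu> n r t) \<le> (real n + 1) ^ (t - r) * R ^ n"
  using mu
proof (induction n arbitrary: t)
  case 0
  then show ?case by auto
next
  case (Suc n)
  consider "t < r" | "t = r" | "r < t" by linarith
  then show ?case
  proof cases
    case 1
    then show ?thesis using R by (simp add: tau_zero)
  next
    case 2
    have "cmod (tau \<mu> (Suc n) r t) = cmod (\<mu> r) ^ Suc n" using 2 by (simp only: tau_diag norm_power)
    also have "\<dots> \<le> R ^ Suc n" using Suc.prems[of r] 2 by (intro power_mono) auto
    finally show ?thesis using 2 by simp
  next
    case 3
    define e where "e = t - r"
    define x where "x = real n + 1"
    have e1: "e \<ge> 1" using 3 e_def by simp
    have x1: "x \<ge> 1" using x_def by simp
    have IH1: "cmod (tau \<mu> n r t) \<le> x ^ e * R ^ n" using Suc.IH[of t] Suc.prems e_def x_def by auto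
    have IH2: "cmod (tau \<mu> n r (t-1)) \<le> x ^ (e-1) * R ^ n"
      using Suc.IH[of "t-1"] Suc.prems e_def x_def 3 by (auto simp: diff_commute)
    have mt: "cmod (\<mu> t) \<le> R" using Suc.prems[of t] 3 by auto
    have t0: "t \<noteq> 0" using 3 by simp
    have "x ^ e + x ^ (e-1) = (x + 1) * x ^ (e-1)"
      using e1 by (cases e) (auto simp: algebra_simps)
    also have "\<dots> \<le> (x+1) * (x+1) ^ (e-1)"
      using x1 by (intro mult_left_mono power_mono) auto
    also have "\<dots> = (x+1) ^ e" using e1 by (cases e) auto
    finally have xe: "x ^ e + x ^ (e-1) \<le> (x+1) ^ e" .
    have "cmod (tau \<mu> (Suc n) r t) \<le> cmod (\<mu> t) * cmod (tau \<mu> n r t) + cmod (tau \<mu> n r (t-1))"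
      using t0 by (simp add: norm_mult[symmetric] norm_triangle_ineq)
    also have "\<dots> \<le> R * (x ^ e * R ^ n) + x ^ (e-1) * R ^ n"
      using mt IH1 IH2 R by (intro add_mono mult_mono) auto
    also have "\<dots> \<le> R * (x ^ e * R ^ n) + x ^ (e-1) * (R * R ^ n)"
      using R x1 by (intro add_mono mult_left_mono) auto
    also have "\<dots> = (x ^ e + x ^ (e-1)) * R ^ Suc n" by (simp add: algebra_simps)
    also have "\<dots> \<le> (x+1)^e * R ^ Suc n" using xe R by (intro mult_right_mono) auto
    finally have X: "cmod (tau \<mu> (Suc n) r t) \<le> (x+1)^e * R^Suc n" .
    have "(x+1)^e * R^Suc n = (real (Suc n) + 1)^(t-r) * R^Suc n" by (simp add: x_def e_def)
    then show ?thesis using X by linarith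
  qed
qed

lemma gb_low: "m < j \<Longrightarrow> gb \<mu> j m = 0"
  by (induction m arbitrary: j) auto

lemma gb_diag: "gb \<mu> j j = 1"
  by (induction j) (auto simp: gb_low)

lemma pa_gb_lin: "pa [:-\<mu> j,1:] (gb \<mu> j) = (\<lambda>n. if j = 0 then 0 else gb \<mu> (j-1) n)"
  by (simp add: pa_lin fun_eq_iff)

lemma gb_ker_aux: "pa (\<Prod>r<Suc j. [:-\<mu> r,1:]) (gb \<mu> j) = (\<lambda>n. 0)"
proof (induction j)
  case 0
  show ?case by (simp add: pa_gb_lin)
next
  case (Suc j)
  have "pa (\<Prod>r<Suc (Suc j). [:-\<mu> r,1:]) (gb \<mu> (Suc j))
      = pa (\<Prod>r<Suc j. [:-\<mu> r,1:]) (pa [:-\<mu> (Suc j),1:] (gb \<mu> (Suc j)))"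
    by (simp only: prod.lessThan_Suc[of _ "Suc j"] pa_mult)
  also have "\<dots> = pa (\<Prod>r<Suc j. [:-\<mu> r,1:]) (gb \<mu> j)"
    by (simp only: pa_gb_lin) simp
  finally show ?case using Suc by simp
qed

lemma gb_ker:
  assumes "j < K"
  shows "pa (\<Prod>r<K. [:-\<mu> r,1:]) (gb \<mu> j) = (\<lambda>n. 0)"
proof -
  have "{..<K} = {..<Suc j} \<union> {Suc j..<K}" using assms by auto
  then have "(\<Prod>r<K. [:-\<mu> r,1:]) = (\<Prod>r\<in>{Suc j..<K}. [:-\<mu> r,1:]) * (\<Prod>r<Suc j. [:-\<mu> r,1:])"
    by (simp add: prod.union_disjoint ivl_disj_int mult.commute)
  then show ?thesis by (simp only: pa_mult gb_ker_aux pa_zero_seq)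
qed

lemma monic_prod_lin: "lead_coeff (\<Prod>r<K. [:-\<mu> r,1::complex:]) = 1"
  by (simp add: lead_coeff_prod)

lemma degree_prod_lin: "degree (\<Prod>r<K. [:-\<mu> r,1::complex:]) = K"
  by (subst degree_prod_sum_eq) auto

lemma pa_uniq:
  assumes lc: "lead_coeff q = 1" and pq: "pa q y = (\<lambda>n. 0)" and init: "\<And>m. m < degree q \<Longrightarrow> y m = 0"
  shows "y m = 0"
proof (induction m rule: less_induct)
  case (less m)
  show ?case
  proof (cases "m < degree q")
    case True
    then show ?thesis by (rule init)
  next
    case False
    define n where "n = m - degree q"
    have m: "m = n + degree q" using False n_def by simp
    have "0 = pa q y n" using pq by (simp add: fun_eq_iff)
    also have "\<dots> = (\<Sum>i<degree q. coeff q i * y (n+i)) + coeff q (degree q) * y (n + degree q)"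
      unfolding pa_def by (simp add: lessThan_Suc_atMost[symmetric])
    also have "(\<Sum>i<degree q. coeff q i * y (n+i)) = 0"
      by (rule sum.neutral) (use less m in auto)
    finally show ?thesis using lc m by simp
  qed
qed

lemma gb_init:
  "\<exists>c. \<forall>m<K. (\<Sum>s<K. c s * gb \<mu> s m) = x m"
proof (induction K)
  case 0
  then show ?case by simp
next
  case (Suc K)
  then obtain c where c: "\<forall>m<K. (\<Sum>s<K. c s * gb \<mu> s m) = x m" by blast
  define c' where "c' = c(K := x K - (\<Sum>s<K. c s * gb \<mu> s K))"
  have sK: "(\<Sum>s<K. c' s * gb \<mu> s m) = (\<Sum>s<K. c s * gb \<mu> s m)" for m
    by (rule sum.cong) (auto simp: c'_def)
  have "\<forall>m<Suc K. (\<Sum>s<Suc K. c' s * gb \<mu> s m) = x m"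
  proof (intro allI impI)
    fix m assume m: "m < Suc K"
    show "(\<Sum>s<Suc K. c' s * gb \<mu> s m) = x m"
    proof (cases "m < K")
      case True
      then show ?thesis using c sK by (simp add: gb_low)
    next
      case False
      then have "m = K" using m by simp
      then show ?thesis using sK by (simp add: gb_diag c'_def)
    qed
  qed
  then show ?case by blast
qed

lemma gb_represent:
  assumes px: "pa (\<Prod>r<K. [:-\<mu> r,1:]) x = (\<lambda>n. 0)"
  shows "\<exists>c. \<forall>m. x m = (\<Sum>s<K. c s * gb \<mu> s m)"
proof -
  obtain c where c: "\<forall>m<K. (\<Sum>s<K. c s * gb \<mu> s m) = x m" using gb_init by blast
  define Q where "Q = (\<Prod>r<K. [:-\<mu> r,1:])"
  define y where "y = (\<lambda>m. x m - (\<Sum>s<K. c s * gb \<mu> s m))"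
  have "pa Q y n = 0" for n
  proof -
    have "pa Q y n = pa Q x n - (\<Sum>s<K. c s * pa Q (gb \<mu> s) n)"
      unfolding y_def by (simp add: pa_minus_seq pa_sum_seq pa_scale_seq)
    also have "\<dots> = 0" using px gb_ker[of _ K \<mu>] unfolding Q_def by simp
    finally show ?thesis .
  qed
  then have "pa Q y = (\<lambda>n. 0)" by auto
  moreover have "lead_coeff Q = 1" "degree Q = K" unfolding Q_def by (rule monic_prod_lin, rule degree_prod_lin)
  ultimately have "y m = 0" for m
    by (intro pa_uniq[of Q y m]) (use c y_def in auto)
  then show ?thesis unfolding y_def by (intro exI[of _ c]) auto
qed

lemma det_mat_leibniz:
  "det (mat k k F) = (\<Sum>p\<in>{p. p permutes {0..<k}}. of_int (sign p) * (\<Prod>i=0..<k. F (i, p i)))"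
proof -
  have "det (mat k k F) = (\<Sum>p\<in>{p. p permutes {0..<k}}. of_int (sign p) * (\<Prod>i=0..<k. mat k k F $$ (i, p i)))"
    by (rule det_def') simp
  also have "\<dots> = (\<Sum>p\<in>{p. p permutes {0..<k}}. of_int (sign p) * (\<Prod>i=0..<k. F (i, p i)))"
  proof (rule sum.cong[OF refl])
    fix p assume "p \<in> {p. p permutes {0..<k}}"
    then have "p permutes {0..<k}" by simp
    then have "i < k \<Longrightarrow> p i < k" for i using permutes_in_image[of p "{0..<k}" i] by simp
    then show "of_int (sign p) * (\<Prod>i=0..<k. mat k k F $$ (i, p i)) = of_int (sign p) * (\<Prod>i=0..<k. F (i, p i))"
      by (auto intro!: prod.cong)
  qed
  finally show ?thesis .
qed

lemma det_expand_prod: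
  fixes A B :: "nat \<Rightarrow> nat \<Rightarrow> complex"
  shows "det (mat k k (\<lambda>(i,j). \<Sum>s<N. A i s * B s j)) =
    (\<Sum>h\<in>{0..<k} \<rightarrow>\<^sub>E {..<N}. (\<Prod>i=0..<k. A i (h i)) * det (mat k k (\<lambda>(i,j). B (h i) j)))"
proof -
  let ?P = "{p. p permutes {0..<k}}"
  let ?H = "{0..<k} \<rightarrow>\<^sub>E {..<N}"
  have "det (mat k k (\<lambda>(i,j). \<Sum>s<N. A i s * B s j)) =
     (\<Sum>p\<in>?P. of_int (sign p) * (\<Prod>i=0..<k. \<Sum>s<N. A i s * B s (p i)))"
    by (simp add: det_mat_leibniz)
  also have "\<dots> = (\<Sum>p\<in>?P. of_int (sign p) * (\<Sum>h\<in>?H. \<Prod>i=0..<k. A i (h i) * B (h i) (p i)))"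
    by (simp add: prod_sum_PiE)
  also have "\<dots> = (\<Sum>p\<in>?P. \<Sum>h\<in>?H. (\<Prod>i=0..<k. A i (h i)) * (of_int (sign p) * (\<Prod>i=0..<k. B (h i) (p i))))"
    by (simp add: sum_distrib_left prod.distrib algebra_simps)
  also have "\<dots> = (\<Sum>h\<in>?H. \<Sum>p\<in>?P. (\<Prod>i=0..<k. A i (h i)) * (of_int (sign p) * (\<Prod>i=0..<k. B (h i) (p i))))"
    by (rule sum.swap)
  also have "\<dots> = (\<Sum>h\<in>?H. (\<Prod>i=0..<k. A i (h i)) * det (mat k k (\<lambda>(i,j). B (h i) j)))"
    by (simp add: det_mat_leibniz sum_distrib_left)
  finally show ?thesis .
qed

lemma det_transpose_fun: "det (mat k k (\<lambda>(i,j). F i j)) = det (mat k k (\<lambda>(i,j). F j i))"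
proof -
  have "transpose_mat (mat k k (\<lambda>(i,j). F i j)) = mat k k (\<lambda>(i,j). F j i)"
    by (rule eq_matI) auto
  then show ?thesis using det_transpose[of "mat k k (\<lambda>(i,j). F i j)" k] by simp
qed

lemma det_XMY:
  fixes X M Y :: "nat \<Rightarrow> nat \<Rightarrow> complex"
  shows "det (mat k k (\<lambda>(i,j). \<Sum>r<D. X i r * (\<Sum>t<D. M r t * Y t j))) =
    (\<Sum>f\<in>{0..<k} \<rightarrow>\<^sub>E {..<D}. (\<Prod>i=0..<k. X i (f i)) *
       (\<Sum>g\<in>{0..<k} \<rightarrow>\<^sub>E {..<D}. (\<Prod>j=0..<k. Y (g j) j) * det (mat k k (\<lambda>(i,j). M (f i) (g j)))))"
proof -
  have inner: "det (mat k k (\<lambda>(i,j). \<Sum>t<D. M (f i) t * Y t j)) =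
    (\<Sum>g\<in>{0..<k} \<rightarrow>\<^sub>E {..<D}. (\<Prod>j=0..<k. Y (g j) j) * det (mat k k (\<lambda>(i,j). M (f i) (g j))))" for f
  proof -
    have "det (mat k k (\<lambda>(i,j). \<Sum>t<D. M (f i) t * Y t j)) = det (mat k k (\<lambda>(i,j). \<Sum>t<D. Y t i * M (f j) t))"
      by (subst det_transpose_fun) (simp add: mult.commute)
    also have "\<dots> = (\<Sum>g\<in>{0..<k} \<rightarrow>\<^sub>E {..<D}. (\<Prod>i=0..<k. Y (g i) i) * det (mat k k (\<lambda>(i,j). M (f j) (g i))))"
      by (rule det_expand_prod)
    also have "\<dots> = (\<Sum>g\<in>{0..<k} \<rightarrow>\<^sub>E {..<D}. (\<Prod>j=0..<k. Y (g j) j) * det (mat k k (\<lambda>(i,j). M (f i) (g j))))"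
      by (subst det_transpose_fun) simp
    finally show ?thesis .
  qed
  show ?thesis by (subst det_expand_prod) (simp add: inner)
qed

lemma det_rows_eq_0:
  assumes "i1 < k" "i2 < k" "i1 \<noteq> i2" "f i1 = f i2"
  shows "det (mat k k (\<lambda>(i,j). F (f i) j)) = (0::complex)"
  by (rule det_identical_rows[of _ k i1 i2]) (use assms in \<open>auto simp: row_mat\<close>)

lemma det_bound:
  fixes F :: "nat \<Rightarrow> nat \<Rightarrow> complex"
  assumes "\<And>i j. i < k \<Longrightarrow> j < k \<Longrightarrow> cmod (F i j) \<le> w i"
  shows "cmod (det (mat k k (\<lambda>(i,j). F i j))) \<le> fact k * (\<Prod>i=0..<k. w i)"
proof -
  let ?P = "{p. p permutes {0..<k}}"
  have "cmod (det (mat k k (\<lambda>(i,j). F i j))) \<le> (\<Sum>p\<in>?P. cmod (of_int (sign p) * (\<Prod>i=0..<k. F i (p i))))"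
    unfolding det_mat_leibniz by (simp add: norm_sum)
  also have "\<dots> \<le> (\<Sum>p\<in>?P. \<Prod>i=0..<k. w i)"
  proof (rule sum_mono)
    fix p assume "p \<in> ?P"
    then have pk: "i < k \<Longrightarrow> p i < k" for i using permutes_in_image[of p "{0..<k}" i] by simp
    have s: "cmod (of_int (sign p) :: complex) = 1" by (simp add: sign_def)
    show "cmod (of_int (sign p) * (\<Prod>i=0..<k. F i (p i))) \<le> (\<Prod>i=0..<k. w i)"
      unfolding norm_mult s prod_norm[symmetric]
      by (simp, rule prod_mono) (use assms pk in auto)
  qed
  also have "\<dots> = fact k * (\<Prod>i=0..<k. w i)"
    by (simp add: card_permutations)
  finally show ?thesis .
qed

lemma det_MY_expand:
  fixes M Y :: "nat \<Rightarrow> nat \<Rightarrow> complex"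
  shows "det (mat k k (\<lambda>(i,j). \<Sum>t<D. M (f i) t * Y t j)) =
    (\<Sum>g\<in>{0..<k} \<rightarrow>\<^sub>E {..<D}. (\<Prod>j=0..<k. Y (g j) j) * det (mat k k (\<lambda>(i,j). M (f i) (g j))))"
proof -
  have "det (mat k k (\<lambda>(i,j). \<Sum>t<D. M (f i) t * Y t j)) = det (mat k k (\<lambda>(i,j). \<Sum>t<D. Y t i * M (f j) t))"
    by (subst det_transpose_fun) (simp add: mult.commute)
  also have "\<dots> = (\<Sum>g\<in>{0..<k} \<rightarrow>\<^sub>E {..<D}. (\<Prod>i=0..<k. Y (g i) i) * det (mat k k (\<lambda>(i,j). M (f j) (g i))))"
    by (rule det_expand_prod)
  also have "\<dots> = (\<Sum>g\<in>{0..<k} \<rightarrow>\<^sub>E {..<D}. (\<Prod>j=0..<k. Y (g j) j) * det (mat k k (\<lambda>(i,j). M (f i) (g j))))"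
    by (subst det_transpose_fun) simp
  finally show ?thesis .
qed

lemma prod_subset_ge1:
  fixes \<rho> :: "nat \<Rightarrow> real"
  assumes "finite T" "S \<subseteq> T" "\<And>x. x \<in> T \<Longrightarrow> 1 \<le> \<rho> x"
  shows "prod \<rho> S \<le> prod \<rho> T"
proof -
  have "prod \<rho> T = prod \<rho> (T - S) * prod \<rho> S" using assms by (simp add: prod.subset_diff)
  moreover have "prod \<rho> (T - S) \<ge> 1" using assms by (intro prod_ge_1) auto
  moreover have "prod \<rho> S \<ge> 0" using assms by (intro prod_nonneg) (auto intro: order.trans[OF zero_le_one])
  ultimately show ?thesis using mult_right_mono[of 1 "prod \<rho> (T - S)" "prod \<rho> S"] by simp
qed

lemma minor_bound:
  fixes M :: "nat \<Rightarrow> nat \<Rightarrow> nat \<Rightarrow> complex" and \<rho> :: "nat \<Rightarrow> real"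
  assumes bnd: "\<And>n r t. r<D \<Longrightarrow> t<D \<Longrightarrow> cmod (M n r t) \<le> (real n + 1)^D * \<rho> r ^ n"
    and rho1: "\<And>r. \<rho> r \<ge> 1"
    and f: "f \<in> {0..<k} \<rightarrow>\<^sub>E {..<D}" and g: "g \<in> {0..<k} \<rightarrow>\<^sub>E {..<D}"
    and inj: "inj_on f {0..<k}"
  shows "cmod (det (mat k k (\<lambda>(i,j). M n (f i) (g j)))) \<le>
           fact k * ((real n + 1)^(D*k) * (prod \<rho> (f ` {0..<k}))^n)"
proof -
  have "cmod (det (mat k k (\<lambda>(i,j). M n (f i) (g j)))) \<le> fact k * (\<Prod>i=0..<k. (real n + 1)^D * \<rho> (f i) ^ n)"
  proof (rule det_bound)
    fix i j assume "i < k" "j < k"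
    then have "f i < D" "g j < D" using f g by (auto simp: PiE_iff)
    then show "cmod (M n (f i) (g j)) \<le> (real n + 1)^D * \<rho> (f i) ^ n" by (rule bnd)
  qed
  also have "(\<Prod>i=0..<k. (real n + 1)^D * \<rho> (f i) ^ n) = (real n + 1)^(D*k) * (\<Prod>i=0..<k. \<rho> (f i))^n"
    by (simp add: prod.distrib power_mult prod_power_distrib)
  also have "(\<Prod>i=0..<k. \<rho> (f i)) = prod \<rho> (f ` {0..<k})"
    using inj by (simp add: prod.reindex)
  finally show ?thesis .
qed

lemma hankel_rep:
  assumes rep: "\<And>n i j. a (n+i+j) = (\<Sum>r<D. X i r * (\<Sum>t<D. M n r t * Y t j))"
  shows "hankel a n k = mat k k (\<lambda>(i,j). \<Sum>r<D. X i r * (\<Sum>t<D. M n r t * Y t j))"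
  unfolding hankel_def
proof (rule arg_cong[where f = "mat k k"])
  show "(\<lambda>(i,j). a (n+i+j)) = (\<lambda>(i,j). \<Sum>r<D. X i r * (\<Sum>t<D. M n r t * Y t j))"
    using rep by (auto simp: fun_eq_iff)
qed

lemma hankel_upper:
  fixes a :: "nat \<Rightarrow> complex" and X Y :: "nat \<Rightarrow> nat \<Rightarrow> complex"
    and M :: "nat \<Rightarrow> nat \<Rightarrow> nat \<Rightarrow> complex" and \<rho> :: "nat \<Rightarrow> real"
  assumes rep: "\<And>n i j. a (n+i+j) = (\<Sum>r<D. X i r * (\<Sum>t<D. M n r t * Y t j))"
    and bnd: "\<And>n r t. r<D \<Longrightarrow> t<D \<Longrightarrow> cmod (M n r t) \<le> (real n + 1)^D * \<rho> r ^ n"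
    and rho1: "\<And>r. \<rho> r \<ge> 1"
  shows "\<exists>C. \<forall>n. cmod (det (hankel a n k)) \<le> C * ((real n + 1)^(D*k) * (\<Prod>r<D. \<rho> r)^n)"
proof -
  let ?F = "{0..<k} \<rightarrow>\<^sub>E {..<D}"
  define P where "P = (\<Prod>r<D. \<rho> r)"
  define C where "C = (\<Sum>f\<in>?F. cmod (\<Prod>i=0..<k. X i (f i)) * (\<Sum>g\<in>?F. cmod (\<Prod>j=0..<k. Y (g j) j) * fact k))"
  have key: "cmod (det (mat k k (\<lambda>(i,j). M n (f i) (g j)))) \<le> fact k * ((real n + 1)^(D*k) * P^n)"
    if f: "f \<in> ?F" and g: "g \<in> ?F" for f g n
  proof (cases "inj_on f {0..<k}")
    case True
    have "cmod (det (mat k k (\<lambda>(i,j). M n (f i) (g j)))) \<le> fact k * ((real n + 1)^(D*k) * (prod \<rho> (f ` {0..<k}))^n)"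
      by (rule minor_bound[OF bnd rho1 f g True])
    also have "\<dots> \<le> fact k * ((real n + 1)^(D*k) * P^n)"
    proof -
      have "prod \<rho> (f ` {0..<k}) \<le> P" unfolding P_def
        by (rule prod_subset_ge1) (use f rho1 in auto)
      moreover have "0 \<le> prod \<rho> (f ` {0..<k})" using rho1 by (intro prod_nonneg) (auto intro: order.trans[OF zero_le_one])
      ultimately show ?thesis by (intro mult_left_mono power_mono) auto
    qed
    finally show ?thesis .
  next
    case False
    then obtain i1 i2 where "i1 < k" "i2 < k" "i1 \<noteq> i2" "f i1 = f i2"
      unfolding inj_on_def by auto
    then have "det (mat k k (\<lambda>(i,j). M n (f i) (g j))) = 0"
      using det_rows_eq_0[of i1 k i2 f "\<lambda>r j. M n r (g j)"] by simp
    moreover have "P \<ge> 0" unfolding P_def using rho1 by (intro prod_nonneg) (auto intro: order.trans[OF zero_le_one])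
    ultimately show ?thesis by simp
  qed
  have "cmod (det (hankel a n k)) \<le> C * ((real n + 1)^(D*k) * P^n)" for n
  proof -
    let ?W = "(real n + 1)^(D*k) * P^n"
    have "cmod (det (hankel a n k)) = cmod (\<Sum>f\<in>?F. (\<Prod>i=0..<k. X i (f i)) *
       (\<Sum>g\<in>?F. (\<Prod>j=0..<k. Y (g j) j) * det (mat k k (\<lambda>(i,j). M n (f i) (g j)))))"
      by (simp only: hankel_rep[where a=a and D=D and X=X and M=M and Y=Y, OF rep] det_XMY)
    also have "\<dots> \<le> (\<Sum>f\<in>?F. cmod (\<Prod>i=0..<k. X i (f i)) *
       (\<Sum>g\<in>?F. cmod (\<Prod>j=0..<k. Y (g j) j) * cmod (det (mat k k (\<lambda>(i,j). M n (f i) (g j))))))"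
      by (rule order.trans[OF norm_sum], rule sum_mono)
         (auto simp: norm_mult intro!: mult_left_mono order.trans[OF norm_sum] sum_mono)
    also have "\<dots> \<le> (\<Sum>f\<in>?F. cmod (\<Prod>i=0..<k. X i (f i)) *
       (\<Sum>g\<in>?F. cmod (\<Prod>j=0..<k. Y (g j) j) * (fact k * ?W)))"
      by (intro sum_mono mult_left_mono key) auto
    also have "\<dots> = C * ?W" unfolding C_def
      by (simp only: sum_distrib_right mult.assoc)
    finally show ?thesis .
  qed
  then show ?thesis unfolding P_def by blast
qed

lemma poly_geom_lim:
  assumes "(m::real) > 1"
  shows "(\<lambda>n. (real n + 1) ^ E / m ^ n) \<longlonglongrightarrow> 0"
  using assms by real_asymp

lemma powr_root_lim: "(\<lambda>n. (real n + 1) powr (E / real n)) \<longlonglongrightarrow> 1"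
  by real_asymp

lemma prod_drop:
  fixes \<rho> :: "nat \<Rightarrow> real"
  assumes S: "S \<subseteq> {..<D}" and cS: "card S = K" and r0: "r0 \<in> S" "K \<le> r0"
    and small: "\<And>r. K \<le> r \<Longrightarrow> \<rho> r = 1" and big: "\<And>r. r < K \<Longrightarrow> \<mu> \<le> \<rho> r" and mu: "1 \<le> \<mu>"
  shows "\<mu> * prod \<rho> S \<le> prod \<rho> {..<K}"
proof -
  define S' where "S' = S \<inter> {..<K}"
  have fS: "finite S" using S finite_subset by blast
  have "prod \<rho> S = prod \<rho> S'"
  proof (rule prod.mono_neutral_right)
    show "finite S" by (rule fS)
    show "S' \<subseteq> S" unfolding S'_def by auto
    show "\<forall>i\<in>S - S'. \<rho> i = 1"
    proof
      fix i assume "i \<in> S - S'"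
      then have "K \<le> i" unfolding S'_def by auto
      then show "\<rho> i = 1" by (rule small)
    qed
  qed
  have "r0 \<notin> S'" using r0(2) unfolding S'_def by simp
  have "S' \<subseteq> S" unfolding S'_def by blast
  then have "S' \<subset> S" using \<open>r0 \<notin> S'\<close> r0(1) by blast
  then have "card S' < card S" using fS by (rule psubset_card_mono[rotated])
  then have "card S' < K" using cS by simp
  have "\<not> {..<K} \<subseteq> S'"
  proof
    assume "{..<K} \<subseteq> S'"
    moreover have "finite S'" using fS unfolding S'_def by simp
    ultimately have "card {..<K} \<le> card S'" by (intro card_mono)
    then show False using \<open>card S' < K\<close> by simp
  qed
  then obtain r1 where r1: "r1 < K" "r1 \<notin> S'" by auto
  have S'K: "S' \<subseteq> {..<K}" unfolding S'_def by auto
  have "prod \<rho> {..<K} = prod \<rho> ({..<K} - S') * prod \<rho> S'"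
    using S'K by (simp add: prod.subset_diff)
  also have "prod \<rho> ({..<K} - S') = \<rho> r1 * prod \<rho> ({..<K} - S' - {r1})"
    using r1 by (intro prod.remove) auto
  finally have eq: "prod \<rho> {..<K} = \<rho> r1 * prod \<rho> ({..<K} - S' - {r1}) * prod \<rho> S'" .
  have ge1: "prod \<rho> ({..<K} - S' - {r1}) \<ge> 1"
    using big mu by (intro prod_ge_1) (auto intro: order.trans)
  have nn: "prod \<rho> S' \<ge> 0" using big mu small
    by (intro prod_nonneg) (metis order.trans zero_le_one not_le)
  have "\<mu> \<le> \<rho> r1 * prod \<rho> ({..<K} - S' - {r1})"
  proof -
    have "\<mu> \<le> \<rho> r1" using big r1 by simp
    also have "\<dots> \<le> \<rho> r1 * prod \<rho> ({..<K} - S' - {r1})"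
      using ge1 big[OF r1(1)] mu
      by (simp add: mult_le_cancel_left1)
    finally show ?thesis .
  qed
  then have "\<mu> * prod \<rho> S' \<le> \<rho> r1 * prod \<rho> ({..<K} - S' - {r1}) * prod \<rho> S'"
    using nn by (rule mult_right_mono)
  then show ?thesis using eq \<open>prod \<rho> S = prod \<rho> S'\<close> by simp
qed

lemma main_term:
  fixes X Y :: "nat \<Rightarrow> nat \<Rightarrow> complex" and M :: "nat \<Rightarrow> nat \<Rightarrow> complex"
  assumes KD: "K \<le> D"
    and blk: "\<And>r t. r < K \<Longrightarrow> K \<le> t \<Longrightarrow> M r t = 0"
    and tri: "\<And>r t. t < r \<Longrightarrow> r < K \<Longrightarrow> M r t = 0"
  shows "det (mat K K (\<lambda>(i,j). \<Sum>s<K. X i s * (\<Sum>t<D. M s t * Y t j))) =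
     det (mat K K (\<lambda>(i,r). X i r)) * ((\<Prod>r<K. M r r) * det (mat K K (\<lambda>(t,j). Y t j)))"
proof -
  define XB where "XB = mat K K (\<lambda>(i,r). X i r)"
  define MB where "MB = mat K K (\<lambda>(r,t). M r t)"
  define YB where "YB = mat K K (\<lambda>(t,j). Y t j)"
  have cX: "XB \<in> carrier_mat K K" and cM: "MB \<in> carrier_mat K K" and cY: "YB \<in> carrier_mat K K"
    unfolding XB_def MB_def YB_def by auto
  have sumD: "(\<Sum>t<D. M s t * Y t j) = (\<Sum>t<K. M s t * Y t j)" if "s < K" for s j
  proof (rule sum.mono_neutral_right)
    show "\<forall>i\<in>{..<D} - {..<K}. M s i * Y i j = 0" using blk[OF that] by auto
  qed (use KD in auto)
  have MY: "(MB * YB) $$ (s, j) = (\<Sum>t<K. M s t * Y t j)" if "s < K" "j < K" for s j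
    using that unfolding MB_def YB_def by (simp add: scalar_prod_def atLeast0LessThan)
  have eq: "mat K K (\<lambda>(i,j). \<Sum>s<K. X i s * (\<Sum>t<D. M s t * Y t j)) = XB * (MB * YB)"
  proof (rule eq_matI)
    fix i j assume ij: "i < dim_row (XB * (MB * YB))" "j < dim_col (XB * (MB * YB))"
    then have i: "i < K" and j: "j < K" using cX cM cY by auto
    have "(XB * (MB * YB)) $$ (i,j) = (\<Sum>s<K. X i s * (MB * YB) $$ (s, j))"
      using i j cX cM cY unfolding XB_def by (simp add: scalar_prod_def atLeast0LessThan)
    also have "\<dots> = (\<Sum>s<K. X i s * (\<Sum>t<D. M s t * Y t j))"
      by (rule sum.cong) (use MY sumD j in auto)
    finally show "mat K K (\<lambda>(i,j). \<Sum>s<K. X i s * (\<Sum>t<D. M s t * Y t j)) $$ (i, j) = (XB * (MB * YB)) $$ (i,j)"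
      using i j by simp
  qed (use cX cM cY in auto)
  have "det MB = (\<Prod>r<K. M r r)"
  proof -
    have "upper_triangular MB"
      by (rule upper_triangularI) (use tri in \<open>auto simp: MB_def\<close>)
    then have "det MB = prod_list (diag_mat MB)" using cM by (rule det_upper_triangular)
    also have "\<dots> = (\<Prod>r<K. M r r)" unfolding prod_list_diag_prod using cM
      by (simp add: MB_def atLeast0LessThan)
    finally show ?thesis .
  qed
  moreover have "det (XB * (MB * YB)) = det XB * (det MB * det YB)"
    using det_mult[OF cX mult_carrier_mat[OF cM cY]] det_mult[OF cM cY] by simp
  ultimately show ?thesis unfolding eq XB_def YB_def by simp
qed

lemma hankel_lower:
  fixes a :: "nat \<Rightarrow> complex" and X Y :: "nat \<Rightarrow> nat \<Rightarrow> complex"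
    and M :: "nat \<Rightarrow> nat \<Rightarrow> nat \<Rightarrow> complex" and \<rho> :: "nat \<Rightarrow> real" and \<theta> :: "nat \<Rightarrow> complex"
  assumes rep: "\<And>n i j. a (n+i+j) = (\<Sum>r<D. X i r * (\<Sum>t<D. M n r t * Y t j))"
    and bnd: "\<And>n r t. r<D \<Longrightarrow> t<D \<Longrightarrow> cmod (M n r t) \<le> (real n + 1)^D * \<rho> r ^ n"
    and rho1: "\<And>r. \<rho> r \<ge> 1"
    and KD: "K \<le> D" and K0: "0 < K"
    and blk: "\<And>n r t. r < K \<Longrightarrow> K \<le> t \<Longrightarrow> M n r t = 0"
    and tri: "\<And>n r t. t < r \<Longrightarrow> r < K \<Longrightarrow> M n r t = 0"
    and diag: "\<And>n r. r < K \<Longrightarrow> M n r r = \<theta> r ^ n"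
    and big: "\<And>r. r < K \<Longrightarrow> \<mu> \<le> \<rho> r" and mu1: "1 < \<mu>"
    and small: "\<And>r. K \<le> r \<Longrightarrow> \<rho> r = 1"
    and nth: "\<And>r. r < K \<Longrightarrow> cmod (\<theta> r) = \<rho> r"
    and dX: "det (mat K K (\<lambda>(i,r). X i r)) \<noteq> 0"
    and dY: "det (mat K K (\<lambda>(t,j). Y t j)) \<noteq> 0"
  shows "ereal (\<Prod>r<K. \<rho> r) \<le> GR K a"
proof -
  let ?F = "{0..<K} \<rightarrow>\<^sub>E {..<D}"
  let ?Fk = "{0..<K} \<rightarrow>\<^sub>E {..<K}"
  define P where "P = (\<Prod>r<K. \<rho> r)"
  have P1: "P \<ge> 1" unfolding P_def using rho1 by (intro prod_ge_1) auto
  have mu0: "\<mu> > 0" using mu1 by simp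
  define c where "c = cmod (det (mat K K (\<lambda>(i,r). X i r))) * cmod (det (mat K K (\<lambda>(t,j). Y t j)))"
  have c0: "c > 0" unfolding c_def using dX dY by simp
  define Z where "Z n f = det (mat K K (\<lambda>(i,j). \<Sum>t<D. M n (f i) t * Y t j))" for n f
  define C2 where "C2 = (\<Sum>f\<in>?F - ?Fk. cmod (\<Prod>i=0..<K. X i (f i)) * (\<Sum>g\<in>?F. cmod (\<Prod>j=0..<K. Y (g j) j) * fact K))"
  define E where "E = D * K"
  have F0F: "?Fk \<subseteq> ?F" using KD by (force simp: PiE_iff)
  have H: "det (hankel a n K) = (\<Sum>f\<in>?F - ?Fk. (\<Prod>i=0..<K. X i (f i)) * Z n f) + (\<Sum>f\<in>?Fk. (\<Prod>i=0..<K. X i (f i)) * Z n f)" for n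
  proof -
    have "det (hankel a n K) = (\<Sum>f\<in>?F. (\<Prod>i=0..<K. X i (f i)) * Z n f)"
      unfolding hankel_rep[where a=a and D=D and X=X and M=M and Y=Y, OF rep] Z_def
      by (rule det_expand_prod)
    also have "\<dots> = (\<Sum>f\<in>?F - ?Fk. (\<Prod>i=0..<K. X i (f i)) * Z n f) + (\<Sum>f\<in>?Fk. (\<Prod>i=0..<K. X i (f i)) * Z n f)"
      by (rule sum.subset_diff[OF F0F]) (simp add: finite_PiE)
    finally show ?thesis .
  qed
  have main: "cmod (\<Sum>f\<in>?Fk. (\<Prod>i=0..<K. X i (f i)) * Z n f) = c * P ^ n" for n
  proof -
    have "(\<Sum>f\<in>?Fk. (\<Prod>i=0..<K. X i (f i)) * Z n f) = det (mat K K (\<lambda>(i,j). \<Sum>s<K. X i s * (\<Sum>t<D. M n s t * Y t j)))"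
      unfolding Z_def by (rule det_expand_prod[symmetric])
    also have "\<dots> = det (mat K K (\<lambda>(i,r). X i r)) * ((\<Prod>r<K. M n r r) * det (mat K K (\<lambda>(t,j). Y t j)))"
      by (rule main_term) (use KD blk tri in auto)
    finally have eq: "(\<Sum>f\<in>?Fk. (\<Prod>i=0..<K. X i (f i)) * Z n f) =
       det (mat K K (\<lambda>(i,r). X i r)) * ((\<Prod>r<K. M n r r) * det (mat K K (\<lambda>(t,j). Y t j)))" .
    have "cmod (\<Prod>r<K. M n r r) = (\<Prod>r<K. cmod (M n r r))" by (rule prod_norm[symmetric])
    also have "\<dots> = (\<Prod>r<K. \<rho> r ^ n)" by (rule prod.cong) (auto simp: diag nth norm_power)
    also have "\<dots> = P ^ n" unfolding P_def by (simp add: prod_power_distrib)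
    finally have "cmod (\<Prod>r<K. M n r r) = P ^ n" .
    then show ?thesis unfolding eq c_def by (simp add: norm_mult)
  qed
  have restf: "cmod (Z n f) \<le> (\<Sum>g\<in>?F. cmod (\<Prod>j=0..<K. Y (g j) j) * fact K) * ((real n + 1)^E * (P/\<mu>)^n)"
    if f: "f \<in> ?F - ?Fk" for n f
  proof -
    have fF: "f \<in> ?F" using f by simp
    have key: "cmod (det (mat K K (\<lambda>(i,j). M n (f i) (g j)))) \<le> fact K * ((real n + 1)^E * (P/\<mu>)^n)"
      if g: "g \<in> ?F" for g
    proof (cases "inj_on f {0..<K}")
      case True
      have "cmod (det (mat K K (\<lambda>(i,j). M n (f i) (g j)))) \<le> fact K * ((real n + 1)^(D*K) * (prod \<rho> (f ` {0..<K}))^n)"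
        by (rule minor_bound[OF bnd rho1 fF g True])
      also have "\<dots> \<le> fact K * ((real n + 1)^E * (P/\<mu>)^n)"
      proof -
        have "\<exists>i<K. \<not> f i < K"
        proof (rule ccontr)
          assume "\<not> (\<exists>i<K. \<not> f i < K)"
          then have "f \<in> ?Fk" using fF by (auto simp: PiE_iff)
          then show False using f by simp
        qed
        then obtain i0 where i0: "i0 < K" "K \<le> f i0" by auto
        have "\<mu> * prod \<rho> (f ` {0..<K}) \<le> prod \<rho> {..<K}"
        proof (rule prod_drop)
          show "f ` {0..<K} \<subseteq> {..<D}" using fF by (auto simp: PiE_iff)
          show "card (f ` {0..<K}) = K" using True by (simp add: card_image)
          show "f i0 \<in> f ` {0..<K}" using i0 by simp
        qed (use i0 small big mu1 in auto)
        then have le: "prod \<rho> (f ` {0..<K}) \<le> P / \<mu>" unfolding P_def using mu0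
          by (simp add: pos_le_divide_eq mult.commute)
        have nn: "0 \<le> prod \<rho> (f ` {0..<K})" using rho1 by (intro prod_nonneg) (auto intro: order.trans[OF zero_le_one])
        show ?thesis unfolding E_def using le nn by (intro mult_left_mono power_mono) auto
      qed
      finally show ?thesis .
    next
      case False
      then obtain i1 i2 where "i1 < K" "i2 < K" "i1 \<noteq> i2" "f i1 = f i2"
        unfolding inj_on_def by auto
      then have "det (mat K K (\<lambda>(i,j). M n (f i) (g j))) = 0"
        using det_rows_eq_0[of i1 K i2 f "\<lambda>r j. M n r (g j)"] by simp
      moreover have "P / \<mu> \<ge> 0" using P1 mu0 by simp
      ultimately show ?thesis by simp
    qed
    have "cmod (Z n f) = cmod (\<Sum>g\<in>?F. (\<Prod>j=0..<K. Y (g j) j) * det (mat K K (\<lambda>(i,j). M n (f i) (g j))))"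
      unfolding Z_def by (simp only: det_MY_expand)
    also have "\<dots> \<le> (\<Sum>g\<in>?F. cmod (\<Prod>j=0..<K. Y (g j) j) * cmod (det (mat K K (\<lambda>(i,j). M n (f i) (g j)))))"
      by (rule order.trans[OF norm_sum]) (simp add: norm_mult)
    also have "\<dots> \<le> (\<Sum>g\<in>?F. cmod (\<Prod>j=0..<K. Y (g j) j) * (fact K * ((real n + 1)^E * (P/\<mu>)^n)))"
      by (intro sum_mono mult_left_mono key) auto
    also have "\<dots> = (\<Sum>g\<in>?F. cmod (\<Prod>j=0..<K. Y (g j) j) * fact K) * ((real n + 1)^E * (P/\<mu>)^n)"
      by (simp only: sum_distrib_right mult.assoc)
    finally show ?thesis .
  qed
  have rest: "cmod (\<Sum>f\<in>?F - ?Fk. (\<Prod>i=0..<K. X i (f i)) * Z n f) \<le> C2 * ((real n + 1)^E * (P/\<mu>)^n)" for n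
  proof -
    have "cmod (\<Sum>f\<in>?F - ?Fk. (\<Prod>i=0..<K. X i (f i)) * Z n f) \<le> (\<Sum>f\<in>?F - ?Fk. cmod (\<Prod>i=0..<K. X i (f i)) * cmod (Z n f))"
      by (rule order.trans[OF norm_sum]) (simp add: norm_mult)
    also have "\<dots> \<le> (\<Sum>f\<in>?F - ?Fk. cmod (\<Prod>i=0..<K. X i (f i)) *
        ((\<Sum>g\<in>?F. cmod (\<Prod>j=0..<K. Y (g j) j) * fact K) * ((real n + 1)^E * (P/\<mu>)^n)))"
      by (intro sum_mono mult_left_mono restf) auto
    also have "\<dots> = C2 * ((real n + 1)^E * (P/\<mu>)^n)" unfolding C2_def
      by (simp only: sum_distrib_right mult.assoc)
    finally show ?thesis .
  qed
  have lim0: "(\<lambda>n. C2 * ((real n + 1)^E / \<mu>^n)) \<longlonglongrightarrow> C2 * 0"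
    by (intro tendsto_mult tendsto_const poly_geom_lim mu1)
  have ev1: "eventually (\<lambda>n. C2 * ((real n + 1)^E / \<mu>^n) < c/2) sequentially"
    using order_tendstoD(2)[OF lim0[simplified], of "c/2"] c0 by simp
  have ev2: "eventually (\<lambda>n. ereal (root n (c/2) * P) \<le> ereal (root n (cmod (det (hankel a n K))))) sequentially"
    using ev1 eventually_gt_at_top[of 0]
  proof eventually_elim
    case (elim n)
    have "C2 * ((real n + 1)^E * (P/\<mu>)^n) = C2 * ((real n + 1)^E / \<mu>^n) * P^n"
      by (simp add: power_divide)
    also have "\<dots> \<le> c/2 * P^n" using elim(1) P1 by (intro mult_right_mono) auto
    finally have r: "cmod (\<Sum>f\<in>?F - ?Fk. (\<Prod>i=0..<K. X i (f i)) * Z n f) \<le> c/2 * P^n"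
      using rest[of n] by linarith
    have "c * P^n - c/2 * P^n \<le> cmod (det (hankel a n K))"
      using norm_diff_ineq[of "\<Sum>f\<in>?Fk. (\<Prod>i=0..<K. X i (f i)) * Z n f" "\<Sum>f\<in>?F - ?Fk. (\<Prod>i=0..<K. X i (f i)) * Z n f"]
        main[of n] r H[of n] by (simp add: add.commute)
    then have "c/2 * P^n \<le> cmod (det (hankel a n K))" by simp
    then have "root n (c/2 * P^n) \<le> root n (cmod (det (hankel a n K)))"
      using elim(2) by (rule real_root_le_mono[rotated])
    moreover have "root n (c/2 * P^n) = root n (c/2) * P"
      using elim(2) P1 by (simp only: real_root_mult real_root_pos2[of n P])
    ultimately show ?case by simp
  qed
  have "(\<lambda>n. root n (c/2) * P) \<longlonglongrightarrow> 1 * P"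
    by (intro tendsto_mult tendsto_const LIMSEQ_root_const) (use c0 in simp)
  then have "(\<lambda>n. ereal (root n (c/2) * P)) \<longlonglongrightarrow> ereal P" by simp
  then have "limsup (\<lambda>n. ereal (root n (c/2) * P)) = ereal P"
    by (intro lim_imp_Limsup) auto
  moreover have "limsup (\<lambda>n. ereal (root n (c/2) * P)) \<le> limsup (\<lambda>n. ereal (root n (cmod (det (hankel a n K)))))"
    using ev2 by (rule Limsup_mono)
  ultimately show ?thesis unfolding GR_def P_def using K0 by simp
qed

lemma GR_upper:
  fixes a :: "nat \<Rightarrow> complex" and X Y :: "nat \<Rightarrow> nat \<Rightarrow> complex"
    and M :: "nat \<Rightarrow> nat \<Rightarrow> nat \<Rightarrow> complex" and \<rho> :: "nat \<Rightarrow> real"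
  assumes rep: "\<And>n i j. a (n+i+j) = (\<Sum>r<D. X i r * (\<Sum>t<D. M n r t * Y t j))"
    and bnd: "\<And>n r t. r<D \<Longrightarrow> t<D \<Longrightarrow> cmod (M n r t) \<le> (real n + 1)^D * \<rho> r ^ n"
    and rho1: "\<And>r. \<rho> r \<ge> 1"
  shows "GR k a \<le> ereal (\<Prod>r<D. \<rho> r)"
proof (cases "k = 0")
  case True
  have "1 \<le> (\<Prod>r<D. \<rho> r)" using rho1 by (intro prod_ge_1) auto
  then show ?thesis using True by (simp add: GR_def)
next
  case False
  define P where "P = (\<Prod>r<D. \<rho> r)"
  have P1: "P \<ge> 1" unfolding P_def using rho1 by (intro prod_ge_1) auto
  obtain C where C: "\<And>n. cmod (det (hankel a n k)) \<le> C * ((real n + 1)^(D*k) * P^n)"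
    using hankel_upper[OF rep bnd rho1, of k] unfolding P_def by blast
  define C' where "C' = max C 1"
  define E where "E = D * k"
  define u where "u n = root n C' * ((real n + 1) powr (real E / real n)) * P" for n
  have ev: "eventually (\<lambda>n. ereal (root n (cmod (det (hankel a n k)))) \<le> ereal (u n)) sequentially"
    using eventually_gt_at_top[of 0]
  proof eventually_elim
    case (elim n)
    have nn: "0 \<le> (real n + 1)^E * P^n" using P1 by simp
    have "cmod (det (hankel a n k)) \<le> C' * ((real n + 1)^E * P^n)"
      using C[of n] nn unfolding E_def C'_def
      by (meson max.cobounded1 mult_right_mono order.trans)
    then have "root n (cmod (det (hankel a n k))) \<le> root n (C' * ((real n + 1)^E * P^n))"
      using elim by (rule real_root_le_mono[rotated])
    also have "root n (C' * ((real n + 1)^E * P^n)) = root n C' * (root n ((real n + 1)^E) * P)"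
      using elim P1 by (simp only: real_root_mult real_root_pos2[of n P])
    also have "root n ((real n + 1)^E) = (real n + 1) powr (real E / real n)"
    proof -
      have "root n ((real n + 1)^E) = ((real n + 1)^E) powr (1 / real n)"
        using elim by (simp add: root_powr_inverse)
      also have "\<dots> = ((real n + 1) powr real E) powr (1 / real n)"
        by (simp add: powr_realpow)
      also have "\<dots> = (real n + 1) powr (real E / real n)"
        by (simp add: powr_powr)
      finally show ?thesis .
    qed
    finally show ?case unfolding u_def by (simp add: mult.assoc)
  qed
  have "(\<lambda>n. u n) \<longlonglongrightarrow> 1 * 1 * P"
    unfolding u_def by (intro tendsto_mult tendsto_const LIMSEQ_root_const powr_root_lim) (simp add: C'_def)
  then have "(\<lambda>n. ereal (u n)) \<longlonglongrightarrow> ereal P" by simp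
  then have "limsup (\<lambda>n. ereal (u n)) = ereal P" by (intro lim_imp_Limsup) auto
  moreover have "limsup (\<lambda>n. ereal (root n (cmod (det (hankel a n k))))) \<le> limsup (\<lambda>n. ereal (u n))"
    using ev by (rule Limsup_mono)
  ultimately show ?thesis unfolding GR_def P_def using False by simp
qed

lemma SUP_GR:
  fixes a :: "nat \<Rightarrow> complex" and X Y :: "nat \<Rightarrow> nat \<Rightarrow> complex"
    and M :: "nat \<Rightarrow> nat \<Rightarrow> nat \<Rightarrow> complex" and \<rho> :: "nat \<Rightarrow> real" and \<theta> :: "nat \<Rightarrow> complex"
  assumes rep: "\<And>n i j. a (n+i+j) = (\<Sum>r<D. X i r * (\<Sum>t<D. M n r t * Y t j))"
    and bnd: "\<And>n r t. r<D \<Longrightarrow> t<D \<Longrightarrow> cmod (M n r t) \<le> (real n + 1)^D * \<rho> r ^ n"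
    and rho1: "\<And>r. \<rho> r \<ge> 1"
    and KD: "K \<le> D"
    and blk: "\<And>n r t. r < K \<Longrightarrow> K \<le> t \<Longrightarrow> M n r t = 0"
    and tri: "\<And>n r t. t < r \<Longrightarrow> r < K \<Longrightarrow> M n r t = 0"
    and diag: "\<And>n r. r < K \<Longrightarrow> M n r r = \<theta> r ^ n"
    and big: "\<And>r. r < K \<Longrightarrow> \<mu> \<le> \<rho> r" and mu1: "1 < \<mu>"
    and small: "\<And>r. K \<le> r \<Longrightarrow> \<rho> r = 1"
    and nth: "\<And>r. r < K \<Longrightarrow> cmod (\<theta> r) = \<rho> r"
    and dX: "det (mat K K (\<lambda>(i,r). X i r)) \<noteq> 0"
    and dY: "det (mat K K (\<lambda>(t,j). Y t j)) \<noteq> 0"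
  shows "(SUP k. GR k a) = ereal (\<Prod>r<K. \<rho> r)"
proof -
  have PD: "(\<Prod>r<D. \<rho> r) = (\<Prod>r<K. \<rho> r)"
  proof (rule prod.mono_neutral_right)
    show "\<forall>i\<in>{..<D} - {..<K}. \<rho> i = 1" using small by auto
  qed (use KD in auto)
  have up: "(SUP k. GR k a) \<le> ereal (\<Prod>r<K. \<rho> r)"
    using GR_upper[OF rep bnd rho1] PD by (intro SUP_least) simp
  have low: "ereal (\<Prod>r<K. \<rho> r) \<le> GR K a"
  proof (cases "K = 0")
    case True
    then show ?thesis by (simp add: GR_def)
  next
    case False
    then show ?thesis
      by (intro hankel_lower[OF rep bnd rho1 KD _ blk tri diag big mu1 small nth dX dY]) auto
  qed
  also have "GR K a \<le> (SUP k. GR k a)" by (rule SUP_upper) simp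
  finally show ?thesis using up by simp
qed

lemma sum_split_add: fixes K L :: nat shows "(\<Sum>r<K+L. f r) = (\<Sum>r<K. f r) + (\<Sum>r<L. (f (K + r) :: 'a::comm_monoid_add))"
proof (induction L)
  case (Suc L)
  show ?case by (simp only: add_Suc_right sum.lessThan_Suc Suc.IH add.assoc)
qed simp

lemma prod_nth_mset: "(\<Prod>r<length xs. f (xs ! r)) = prod_mset (image_mset f (mset xs))"
proof -
  have "prod_mset (image_mset f (mset xs)) = prod_mset (mset (map f xs))"
    by (simp only: mset_map)
  also have "\<dots> = prod_list (map f xs)" by (rule prod_mset_prod_list)
  also have "\<dots> = (\<Prod>r\<in>{0..<length (map f xs)}. map f xs ! r)" by (rule prod.list_conv_set_nth)
  also have "\<dots> = (\<Prod>r<length xs. f (xs ! r))"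
    by (simp only: length_map atLeast0LessThan) (rule prod.cong, auto)
  finally show ?thesis by simp
qed

lemma block_shift:
  assumes x: "\<And>m. x m = (\<Sum>s<K. c s * gb \<mu> s m)"
  shows "x (j + m) = (\<Sum>t<K. (\<Sum>s<K. c s * tau \<mu> j t s) * gb \<mu> t m)"
proof -
  have "x (j + m) = (\<Sum>s<K. c s * (\<Sum>t<K. tau \<mu> j t s * gb \<mu> t m))"
    unfolding x by (intro sum.cong refl) (simp add: gb_shift)
  also have "\<dots> = (\<Sum>s<K. \<Sum>t<K. c s * tau \<mu> j t s * gb \<mu> t m)"
    by (simp add: sum_distrib_left mult.assoc)
  also have "\<dots> = (\<Sum>t<K. \<Sum>s<K. c s * tau \<mu> j t s * gb \<mu> t m)"
    by (rule sum.swap)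
  also have "\<dots> = (\<Sum>t<K. (\<Sum>s<K. c s * tau \<mu> j t s) * gb \<mu> t m)"
    by (simp only: sum_distrib_right)
  finally show ?thesis .
qed

lemma block_rep:
  assumes x: "\<And>m. x m = (\<Sum>s<K. c s * gb \<mu> s m)"
  shows "x (n+i+j) = (\<Sum>r<K. gb \<mu> r i * (\<Sum>t<K. tau \<mu> n r t * (\<Sum>s<K. c s * tau \<mu> j t s)))"
proof -
  define Y where "Y t = (\<Sum>s<K. c s * tau \<mu> j t s)" for t
  have "x (n+i+j) = x (j + (n+i))" by (simp add: add.commute)
  also have "\<dots> = (\<Sum>t<K. Y t * gb \<mu> t (n+i))" unfolding Y_def by (rule block_shift[OF x])
  also have "\<dots> = (\<Sum>t<K. Y t * (\<Sum>r<K. tau \<mu> n r t * gb \<mu> r i))"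
    by (intro sum.cong refl) (simp add: gb_shift)
  also have "\<dots> = (\<Sum>t<K. \<Sum>r<K. gb \<mu> r i * (tau \<mu> n r t * Y t))"
    by (simp only: sum_distrib_left mult.commute mult.left_commute)
  also have "\<dots> = (\<Sum>r<K. \<Sum>t<K. gb \<mu> r i * (tau \<mu> n r t * Y t))"
    by (rule sum.swap)
  also have "\<dots> = (\<Sum>r<K. gb \<mu> r i * (\<Sum>t<K. tau \<mu> n r t * Y t))"
    by (simp add: sum_distrib_left)
  finally show ?thesis unfolding Y_def .
qed

lemma pa_monom_sum:
  "pa (\<Sum>j<K. monom (v j) j) x m = (\<Sum>j<K. v j * x (m + j))"
proof (induction K)
  case 0
  then show ?case by (simp add: pa_def)
next
  case (Suc K)
  have "pa (monom (v K) K) x m = v K * x (m + K)"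
  proof -
    have "pa (monom (v K) K) x m = (\<Sum>i\<le>K. coeff (monom (v K) K) i * x (m+i))"
      by (rule pa_N) (simp add: degree_monom_le)
    also have "\<dots> = (\<Sum>i\<le>K. if i = K then v K * x (m+K) else 0)"
      by (rule sum.cong) (auto simp: coeff_monom)
    also have "\<dots> = v K * x (m + K)" by simp
    finally show ?thesis .
  qed
  then show ?case by (simp only: sum.lessThan_Suc pa_add Suc.IH)
qed

lemma SUP_GR_minpoly:
  assumes lr: "linearly_recurrent a"
  shows "(SUP k. GR k a) = ereal (prod_mset (image_mset cmod (filter_mset (\<lambda>z. 1 < cmod z) (proots (min_poly a)))))"
proof -
  define p where "p = min_poly a"
  have lp: "lead_coeff p = 1" "pa p a = (\<lambda>n. 0)"
    using minpoly_props(1)[OF lr] unfolding p_def lin_rec_poly_pa by auto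
  have p0: "p \<noteq> 0" using lp by auto
  define Mb where "Mb = filter_mset (\<lambda>z. 1 < cmod z) (proots p)"
  define Ms where "Ms = filter_mset (\<lambda>z. \<not> 1 < cmod z) (proots p)"
  obtain bs0 where bs0: "mset bs0 = Mb" using ex_mset by blast
  define bs where "bs = sort_key (\<lambda>z. - cmod z) bs0"
  have mbs: "mset bs = Mb" unfolding bs_def using bs0 by simp
  obtain ss where mss: "mset ss = Ms" using ex_mset by blast
  define K where "K = length bs"
  define L where "L = length ss"
  define \<mu>1 where "\<mu>1 r = bs ! r" for r
  define \<mu>2 where "\<mu>2 r = ss ! r" for r
  have big1: "1 < cmod (\<mu>1 r)" if "r < K" for r
  proof -
    have "\<mu>1 r \<in> set bs" unfolding \<mu>1_def using that K_def by simp
    then have "\<mu>1 r \<in># Mb" using mbs by (metis set_mset_mset)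
    then show ?thesis unfolding Mb_def by simp
  qed
  have small2: "cmod (\<mu>2 r) \<le> 1" if "r < L" for r
  proof -
    have "\<mu>2 r \<in> set ss" unfolding \<mu>2_def using that L_def by simp
    then have "\<mu>2 r \<in># Ms" using mss by (metis set_mset_mset)
    then show ?thesis unfolding Ms_def by simp
  qed
  have sorted1: "cmod (\<mu>1 j) \<le> cmod (\<mu>1 i)" if "i \<le> j" "j < K" for i j
  proof -
    have "sorted (map (\<lambda>z. - cmod z) bs)" unfolding bs_def by (rule sorted_sort_key)
    then have "map (\<lambda>z. - cmod z) bs ! i \<le> map (\<lambda>z. - cmod z) bs ! j"
      using that K_def by (intro sorted_nth_mono) auto
    then show ?thesis using that K_def unfolding \<mu>1_def by simp
  qed
  define pb where "pb = (\<Prod>r<K. [:-\<mu>1 r,1:])"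
  define ps where "ps = (\<Prod>r<L. [:-\<mu>2 r,1:])"
  have pbm: "pb = prod_mset (image_mset (\<lambda>x. [:-x,1:]) Mb)"
    unfolding pb_def K_def \<mu>1_def mbs[symmetric] by (rule prod_nth_mset)
  have psm: "ps = prod_mset (image_mset (\<lambda>x. [:-x,1:]) Ms)"
    unfolding ps_def L_def \<mu>2_def mss[symmetric] by (rule prod_nth_mset)
  have pfac: "p = pb * ps"
  proof -
    have "p = smult (lead_coeff p) (prod_mset (image_mset (\<lambda>x. [:-x,1:]) (proots p)))"
      by (rule complex_poly_decompose_multiset[symmetric])
    also have "\<dots> = prod_mset (image_mset (\<lambda>x. [:-x,1:]) (proots p))" using lp by simp
    also have "proots p = Mb + Ms" unfolding Mb_def Ms_def by (rule multiset_partition)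
    finally show ?thesis unfolding pbm psm by simp
  qed
  have pb0: "pb \<noteq> 0" and ps0: "ps \<noteq> 0" using pfac p0 by auto
  have poly_pb: "poly pb z = 0 \<Longrightarrow> \<exists>r<K. z = \<mu>1 r" for z
    unfolding pb_def poly_prod by (auto simp: prod_zero_iff)
  have poly_ps: "poly ps z = 0 \<Longrightarrow> \<exists>r<L. z = \<mu>2 r" for z
    unfolding ps_def poly_prod by (auto simp: prod_zero_iff)
  have gcd1: "gcd pb ps = 1"
  proof -
    define g where "g = gcd pb ps"
    have g0: "g \<noteq> 0" unfolding g_def using pb0 by simp
    have "degree g = 0"
    proof (rule ccontr)
      assume "degree g \<noteq> 0"
      then have "\<not> constant (poly g)" by (simp add: constant_degree)
      then obtain z where z: "poly g z = 0" using fundamental_theorem_of_algebra by blast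
      have "g dvd pb" "g dvd ps" unfolding g_def by auto
      then have "poly pb z = 0" "poly ps z = 0" using z by (auto elim!: dvdE)
      then obtain r r' where "r < K" "z = \<mu>1 r" "r' < L" "z = \<mu>2 r'" using poly_pb poly_ps by blast
      then show False using big1 small2 by fastforce
    qed
    then have "is_unit g" using g0 by (simp add: is_unit_iff_degree)
    then show ?thesis unfolding g_def by (simp add: is_unit_gcd_iff)
  qed
  obtain u v where uv: "u * pb + v * ps = 1"
    using bezout_coefficients_fst_snd[of pb ps] gcd1 by metis
  define a1 where "a1 = pa (v * ps) a"
  define a2 where "a2 = pa (u * pb) a"
  have asum: "a n = a1 n + a2 n" for n
  proof -
    have "a n = pa (u * pb + v * ps) a n" using uv by simp
    also have "\<dots> = a1 n + a2 n" unfolding a1_def a2_def by (simp add: pa_add)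
    finally show ?thesis .
  qed
  have k1: "pa pb a1 = (\<lambda>n. 0)"
  proof -
    have "pa pb a1 = pa (pb * (v * ps)) a" unfolding a1_def by (simp only: pa_mult)
    also have "pb * (v * ps) = v * p" unfolding pfac by (simp only: mult_ac)
    also have "pa (v * p) a = (\<lambda>n. 0)" by (simp only: pa_mult lp pa_zero_seq)
    finally show ?thesis .
  qed
  have k2: "pa ps a2 = (\<lambda>n. 0)"
  proof -
    have "pa ps a2 = pa (ps * (u * pb)) a" unfolding a2_def by (simp only: pa_mult)
    also have "ps * (u * pb) = u * p" unfolding pfac by (simp only: mult_ac)
    also have "pa (u * p) a = (\<lambda>n. 0)" by (simp only: pa_mult lp pa_zero_seq)
    finally show ?thesis .
  qed
  obtain c1 where c1: "\<And>m. a1 m = (\<Sum>s<K. c1 s * gb \<mu>1 s m)"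
    using gb_represent[where K=K and \<mu>=\<mu>1 and x=a1] k1 unfolding pb_def by blast
  obtain c2 where c2: "\<And>m. a2 m = (\<Sum>s<L. c2 s * gb \<mu>2 s m)"
    using gb_represent[where K=L and \<mu>=\<mu>2 and x=a2] k2 unfolding ps_def by blast
  define D where "D = K + L"
  define X where "X i r = (if r < K then gb \<mu>1 r i else gb \<mu>2 (r-K) i)" for i r
  define M where "M n r t = (if r < K \<and> t < K then tau \<mu>1 n r t
      else if K \<le> r \<and> K \<le> t then tau \<mu>2 n (r-K) (t-K) else 0)" for n r t
  define Y where "Y t j = (if t < K then (\<Sum>s<K. c1 s * tau \<mu>1 j t s)
      else (\<Sum>s<L. c2 s * tau \<mu>2 j (t-K) s))" for t j
  define \<rho> where "\<rho> r = (if r < K then cmod (\<mu>1 r) else 1)" for r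
  define \<mu> where "\<mu> = (if K = 0 then 2 else cmod (\<mu>1 (K-1)))"
  have rep: "a (n+i+j) = (\<Sum>r<D. X i r * (\<Sum>t<D. M n r t * Y t j))" for n i j
  proof -
    have inner1: "(\<Sum>t<D. M n r t * Y t j) = (\<Sum>t<K. tau \<mu>1 n r t * (\<Sum>s<K. c1 s * tau \<mu>1 j t s))"
      if "r < K" for r
      unfolding D_def sum_split_add using that by (simp add: M_def Y_def)
    have inner2: "(\<Sum>t<D. M n (K+r) t * Y t j) = (\<Sum>t<L. tau \<mu>2 n r t * (\<Sum>s<L. c2 s * tau \<mu>2 j t s))"
      for r
      unfolding D_def sum_split_add by (simp add: M_def Y_def)
    have "(\<Sum>r<D. X i r * (\<Sum>t<D. M n r t * Y t j)) =
        (\<Sum>r<K. X i r * (\<Sum>t<D. M n r t * Y t j)) + (\<Sum>r<L. X i (K+r) * (\<Sum>t<D. M n (K+r) t * Y t j))"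
      unfolding D_def by (rule sum_split_add)
    also have "(\<Sum>r<K. X i r * (\<Sum>t<D. M n r t * Y t j)) =
        (\<Sum>r<K. gb \<mu>1 r i * (\<Sum>t<K. tau \<mu>1 n r t * (\<Sum>s<K. c1 s * tau \<mu>1 j t s)))"
      by (intro sum.cong refl) (simp add: inner1 X_def)
    also have "\<dots> = a1 (n+i+j)" by (rule block_rep[OF c1, symmetric])
    also have "(\<Sum>r<L. X i (K+r) * (\<Sum>t<D. M n (K+r) t * Y t j)) =
        (\<Sum>r<L. gb \<mu>2 r i * (\<Sum>t<L. tau \<mu>2 n r t * (\<Sum>s<L. c2 s * tau \<mu>2 j t s)))"
      by (intro sum.cong refl) (simp add: inner2 X_def)
    also have "\<dots> = a2 (n+i+j)" by (rule block_rep[OF c2, symmetric])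
    finally show ?thesis using asum by simp
  qed
  have bnd: "cmod (M n r t) \<le> (real n + 1)^D * \<rho> r ^ n" if "r < D" "t < D" for n r t
  proof -
    have n1: "1 \<le> real n + 1" by simp
    consider "r < K \<and> t < K" | "K \<le> r \<and> K \<le> t" | "\<not> (r < K \<and> t < K) \<and> \<not> (K \<le> r \<and> K \<le> t)" by blast
    then show ?thesis
    proof cases
      case 1
      have "cmod (tau \<mu>1 n r t) \<le> (real n + 1)^(t-r) * cmod (\<mu>1 r) ^ n"
        by (rule tau_bound) (use 1 big1 sorted1 in \<open>auto intro: less_imp_le\<close>)
      also have "\<dots> \<le> (real n + 1)^D * cmod (\<mu>1 r) ^ n"
        using that n1 by (intro mult_right_mono power_increasing) auto
      finally show ?thesis using 1 by (simp add: M_def \<rho>_def)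
    next
      case 2
      have "cmod (tau \<mu>2 n (r-K) (t-K)) \<le> (real n + 1)^(t-K-(r-K)) * 1 ^ n"
        by (rule tau_bound) (use 2 that small2 D_def in auto)
      also have "\<dots> \<le> (real n + 1)^D"
        using that n1 by (simp add: power_increasing)
      finally show ?thesis using 2 by (simp add: M_def \<rho>_def)
    next
      case 3
      then have "M n r t = 0" unfolding M_def by auto
      moreover have "\<rho> r \<ge> 0" using big1 unfolding \<rho>_def by (auto intro: less_imp_le order.trans[OF zero_le_one])
      ultimately show ?thesis by simp
    qed
  qed
  have rho1: "\<rho> r \<ge> 1" for r using big1 unfolding \<rho>_def by (auto intro: less_imp_le)
  have KD: "K \<le> D" unfolding D_def by simp
  have blk: "M n r t = 0" if "r < K" "K \<le> t" for n r t using that unfolding M_def by auto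
  have tri: "M n r t = 0" if "t < r" "r < K" for n r t using that unfolding M_def by (auto simp: tau_zero)
  have diag: "M n r r = \<mu>1 r ^ n" if "r < K" for n r using that unfolding M_def by (simp add: tau_diag)
  have bigr: "\<mu> \<le> \<rho> r" if "r < K" for r using that sorted1[of r "K-1"] unfolding \<mu>_def \<rho>_def by auto
  have mu1: "1 < \<mu>" unfolding \<mu>_def using big1[of "K-1"] by auto
  have smallr: "\<rho> r = 1" if "K \<le> r" for r using that unfolding \<rho>_def by auto
  have nth: "cmod (\<mu>1 r) = \<rho> r" if "r < K" for r using that unfolding \<rho>_def by auto
  have dX: "det (mat K K (\<lambda>(i,r). X i r)) \<noteq> 0"
  proof -
    have eq: "mat K K (\<lambda>(i,r). X i r) = mat K K (\<lambda>(i,r). gb \<mu>1 r i)"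
      by (rule eq_matI) (auto simp: X_def)
    have "det (mat K K (\<lambda>(i,r). gb \<mu>1 r i)) = prod_list (diag_mat (mat K K (\<lambda>(i,r). gb \<mu>1 r i)))"
      by (rule det_lower_triangular[of K]) (auto simp: gb_low)
    also have "\<dots> = 1" unfolding prod_list_diag_prod by (simp add: gb_diag)
    finally show ?thesis unfolding eq by simp
  qed
  have dY: "det (mat K K (\<lambda>(t,j). Y t j)) \<noteq> 0"
  proof
    define Y1 where "Y1 t j = (\<Sum>s<K. c1 s * tau \<mu>1 j t s)" for t j
    define YB where "YB = mat K K (\<lambda>(t,j). Y1 t j)"
    have eq: "mat K K (\<lambda>(t,j). Y t j) = YB"
      unfolding YB_def by (rule eq_matI) (auto simp: Y_def Y1_def)
    assume "det (mat K K (\<lambda>(t,j). Y t j)) = 0"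
    then have "det YB = 0" unfolding eq .
    moreover have cYB: "YB \<in> carrier_mat K K" unfolding YB_def by simp
    ultimately obtain w where w: "w \<in> carrier_vec K" "w \<noteq> 0\<^sub>v K" "YB *\<^sub>v w = 0\<^sub>v K"
      using det_0_iff_vec_prod_zero_field[OF cYB] by blast
    have wz: "(\<Sum>j<K. Y1 t j * w $ j) = 0" if "t < K" for t
    proof -
      have "(YB *\<^sub>v w) $ t = 0" using w(3) that by simp
      then show ?thesis using that w(1) unfolding YB_def
        by (simp add: scalar_prod_def atLeast0LessThan)
    qed
    obtain j0 where j0: "j0 < K" "w $ j0 \<noteq> 0"
      using w(1,2) by (metis dim_vec_def carrier_vecD eq_vecI index_zero_vec(1) index_zero_vec(2))
    define W where "W = (\<Sum>j<K. monom (w $ j) j)"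
    have coeffW: "coeff W i = (if i < K then w $ i else 0)" for i
      unfolding W_def coeff_sum by (simp add: coeff_monom)
    have W0: "W \<noteq> 0" using coeffW[of j0] j0 by auto
    have degW: "degree W < K"
      by (rule degree_lessI) (use W0 coeffW in auto)
    have paW: "pa W a1 = (\<lambda>n. 0)"
    proof
      fix m
      have "pa W a1 m = (\<Sum>j<K. w $ j * a1 (m + j))" unfolding W_def by (rule pa_monom_sum)
      also have "\<dots> = (\<Sum>j<K. w $ j * (\<Sum>t<K. Y1 t j * gb \<mu>1 t m))"
        by (intro sum.cong refl) (simp add: add.commute[of m] block_shift[OF c1] Y1_def)
      also have "\<dots> = (\<Sum>j<K. \<Sum>t<K. gb \<mu>1 t m * (Y1 t j * w $ j))"
        by (simp only: sum_distrib_left mult.commute mult.left_commute)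
      also have "\<dots> = (\<Sum>t<K. \<Sum>j<K. gb \<mu>1 t m * (Y1 t j * w $ j))"
        by (rule sum.swap)
      also have "\<dots> = (\<Sum>t<K. gb \<mu>1 t m * (\<Sum>j<K. Y1 t j * w $ j))"
        by (simp only: sum_distrib_left)
      also have "\<dots> = 0" using wz by simp
      finally show "pa W a1 m = 0" .
    qed
    have aeq: "a = (\<lambda>n. a1 n + a2 n)" using asum by auto
    have "pa ps a n = pa ps a1 n" for n
      unfolding aeq pa_plus_seq using k2 by (simp add: fun_eq_iff)
    then have "pa ps a = pa ps a1" by auto
    then have "pa (W * ps) a = (\<lambda>n. 0)"
      by (simp only: pa_mult pa_commute[of W ps] paW pa_zero_seq)
    then have "p dvd W * ps" unfolding p_def by (rule minpoly_props(2)[OF lr])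
    then have "pb dvd W" unfolding pfac using ps0 by (simp add: dvd_times_right_cancel_iff)
    then have "degree pb \<le> degree W" using W0 by (rule dvd_imp_degree_le)
    moreover have "degree pb = K" unfolding pb_def by (rule degree_prod_lin)
    ultimately show False using degW by simp
  qed
  have "(SUP k. GR k a) = ereal (\<Prod>r<K. \<rho> r)"
    by (rule SUP_GR[OF rep bnd rho1 KD blk tri diag bigr mu1 smallr nth dX dY])
  also have "(\<Prod>r<K. \<rho> r) = (\<Prod>r<K. cmod (\<mu>1 r))" by (rule prod.cong) (auto simp: \<rho>_def)
  also have "\<dots> = prod_mset (image_mset cmod Mb)"
    unfolding K_def \<mu>1_def mbs[symmetric] by (rule prod_nth_mset)
  finally show ?thesis unfolding Mb_def p_def .
qed


theorem proposition2p3: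
  fixes a b :: "nat \<Rightarrow> complex"
  assumes "linearly_recurrent a" and "linearly_recurrent b"
    and "\<exists>B. \<forall>n. cmod (a n - b n) \<le> B"
  shows "(\<forall>z. cmod z > 1 \<longrightarrow> order z (min_poly a) = order z (min_poly b))
         \<and> (SUP k. GR k a) = (SUP k. GR k b)"
proof -
  obtain B where B: "\<And>n. cmod (a n - b n) \<le> B" using assms(3) by blast
  have B': "\<And>n. cmod (b n - a n) \<le> B" using B by (simp add: norm_minus_commute)
  have ordeq: "order z (min_poly a) = order z (min_poly b)" if z: "cmod z > 1" for z
  proof (rule antisym)
    show "order z (min_poly a) \<le> order z (min_poly b)"
      by (rule order_le_bounded_diff[OF assms(1,2) B z])
    show "order z (min_poly b) \<le> order z (min_poly a)"
      by (rule order_le_bounded_diff[OF assms(2,1) B' z])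
  qed
  have na: "min_poly a \<noteq> 0" using minpoly_props(1)[OF assms(1)] by (auto simp: lin_rec_poly_pa)
  have nb: "min_poly b \<noteq> 0" using minpoly_props(1)[OF assms(2)] by (auto simp: lin_rec_poly_pa)
  have filt: "filter_mset (\<lambda>z. 1 < cmod z) (proots (min_poly a)) = filter_mset (\<lambda>z. 1 < cmod z) (proots (min_poly b))"
  proof (rule multiset_eqI)
    fix z
    show "count (filter_mset (\<lambda>z. 1 < cmod z) (proots (min_poly a))) z =
          count (filter_mset (\<lambda>z. 1 < cmod z) (proots (min_poly b))) z"
      using ordeq[of z] na nb by (simp add: count_proots)
  qed
  have "(SUP k. GR k a) = (SUP k. GR k b)"
    unfolding SUP_GR_minpoly[OF assms(1)] SUP_GR_minpoly[OF assms(2)] filt ..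
  then show ?thesis using ordeq by blast
qed

end
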